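(* Let $K$ be a division ring and $G$ a group. If $a\in K[G]$ is one-sided invertible and of rank $2$, then $a$ is invertible. Furthermore, a rank $2$ element $a$ of $K[G]$ is invertible if and only if it is of the form $a=sh(1-rg)$ for some $s,r\in K\setminus\{0\}$ and $g,h\in G$, where $g$ has finite order $n>1$ and $r^n\ne1$; in that case $a^{-1}=(1-r^n)^{-1}(1+rg+r^2g^2+\dots+r^{n-1}g^{n-1})h^{-1}s^{-1}$.
   Context: $K[G]$ is the group ring (coefficients from $K$ commute with group elements). The rank of $a\in K[G]$ is the number of group elements with nonzero coefficient in $a$. *)

theory Defs
  imports "HOL-Algebra.Multiplicative_Group"
begin

text \<open>Coefficients commute with group elements.\<close>

definition gr_supp :: "('g \<Rightarrow> 'k::division_ring) \<Rightarrow> 'g set" where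
  "gr_supp a = {x. a x \<noteq> 0}"

definition gr_elem :: "('g, 'm) monoid_scheme \<Rightarrow> ('g \<Rightarrow> 'k::division_ring) \<Rightarrow> bool" where
  "gr_elem G a \<longleftrightarrow> finite (gr_supp a) \<and> gr_supp a \<subseteq> carrier G"

definition gr_rank :: "('g \<Rightarrow> 'k::division_ring) \<Rightarrow> nat" where
  "gr_rank a = card (gr_supp a)"

definition gr_mult :: "('g, 'm) monoid_scheme \<Rightarrow> ('g \<Rightarrow> 'k::division_ring) \<Rightarrow> ('g \<Rightarrow> 'k) \<Rightarrow> ('g \<Rightarrow> 'k)" where
  "gr_mult G a b = (\<lambda>z. if z \<in> carrier G
      then (\<Sum>x\<in>gr_supp a. a x * b (inv\<^bsub>G\<^esub> x \<otimes>\<^bsub>G\<^esub> z)) else 0)"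

definition gr_of :: "'k::division_ring \<Rightarrow> 'g \<Rightarrow> ('g \<Rightarrow> 'k)" where
  "gr_of c g = (\<lambda>z. if z = g then c else 0)"

definition gr_one :: "('g, 'm) monoid_scheme \<Rightarrow> ('g \<Rightarrow> 'k::division_ring)" where
  "gr_one G = gr_of 1 \<one>\<^bsub>G\<^esub>"

definition gr_minus :: "('g \<Rightarrow> 'k::division_ring) \<Rightarrow> ('g \<Rightarrow> 'k) \<Rightarrow> ('g \<Rightarrow> 'k)" where
  "gr_minus a b = (\<lambda>z. a z - b z)"

definition gr_invertible :: "('g, 'm) monoid_scheme \<Rightarrow> ('g \<Rightarrow> 'k::division_ring) \<Rightarrow> bool" where
  "gr_invertible G a \<longleftrightarrow> (\<exists>b. gr_elem G b \<and> gr_mult G a b = gr_one G \<and> gr_mult G b a = gr_one G)"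

definition gr_one_sided_invertible :: "('g, 'm) monoid_scheme \<Rightarrow> ('g \<Rightarrow> 'k::division_ring) \<Rightarrow> bool" where
  "gr_one_sided_invertible G a \<longleftrightarrow>
     (\<exists>b. gr_elem G b \<and> (gr_mult G a b = gr_one G \<or> gr_mult G b a = gr_one G))"

end

theory Submission
  imports Defs
begin


lemma rec_fin_left:
  fixes f :: "nat \<Rightarrow> 'k::division_ring"
  assumes a0: "\<alpha> \<noteq> 0" and n1: "n \<ge> 1"
    and st: "\<And>k. Suc k < n \<Longrightarrow> \<alpha> * f (Suc k) + \<beta> * f k = 0"
    and b: "\<alpha> * f 0 + \<beta> * f (n - 1) = 1"
  shows "(- (inverse \<alpha> * \<beta>)) ^ n \<noteq> 1"
proof
  define r where "r = - (inverse \<alpha> * \<beta>)"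
  have be: "\<beta> = - (\<alpha> * r)" using a0 by (simp add: r_def mult.assoc[symmetric])
  have fk: "k < n \<Longrightarrow> f k = r ^ k * f 0" for k
  proof (induction k)
    case (Suc k)
    have "\<alpha> * f (Suc k) = \<alpha> * (r * f k)" using st[OF Suc.prems] be
      by (simp add: algebra_simps eq_neg_iff_add_eq_0)
    hence "f (Suc k) = r * f k" using a0 by simp
    with Suc show ?case by (simp add: mult.assoc)
  qed simp
  assume "(- (inverse \<alpha> * \<beta>)) ^ n = 1"
  hence rn: "r ^ n = 1" by (simp add: r_def)
  have "r * r ^ (n - 1) = r ^ n" using n1 by (metis Suc_diff_le diff_Suc_1 power_Suc)
  hence e1: "r ^ n * f 0 = r * (r ^ (n-1) * f 0)" by (metis mult.assoc)
  have "\<alpha> * f 0 + \<beta> * f (n - 1) = \<alpha> * (1 - r ^ n) * f 0"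
    using fk[of "n - 1"] n1 be e1 by (simp add: algebra_simps)
  with b rn show False by simp
qed

lemma conj_pow:
  fixes q :: "'k::division_ring"
  assumes "a \<noteq> 0"
  shows "(inverse a * q * a) ^ n = inverse a * q ^ n * a"
proof (induction n)
  case (Suc n)
  have "(inverse a * q * a) ^ Suc n = (inverse a * q * a) * (inverse a * q ^ n * a)"
    using Suc by simp
  also have "\<dots> = inverse a * q * (a * inverse a) * q ^ n * a" by (simp add: mult.assoc)
  also have "\<dots> = inverse a * q ^ Suc n * a" using assms by (simp add: mult.assoc)
  finally show ?case .
qed (use assms in simp)

lemma rec_fin_right:
  fixes f :: "nat \<Rightarrow> 'k::division_ring"
  assumes a0: "\<alpha> \<noteq> 0" and n1: "n \<ge> 1"
    and st: "\<And>k. Suc k < n \<Longrightarrow> f (Suc k) * \<alpha> + f k * \<beta> = 0"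
    and b: "f 0 * \<alpha> + f (n - 1) * \<beta> = 1"
  shows "(- (inverse \<alpha> * \<beta>)) ^ n \<noteq> 1"
proof
  define r where "r = - (\<beta> * inverse \<alpha>)"
  have be: "\<beta> = - (r * \<alpha>)" using a0 by (simp add: r_def mult.assoc)
  have fk: "k < n \<Longrightarrow> f k = f 0 * r ^ k" for k
  proof (induction k)
    case (Suc k)
    have "f (Suc k) * \<alpha> = (f k * r) * \<alpha>" using st[OF Suc.prems] be
      by (simp add: algebra_simps eq_neg_iff_add_eq_0)
    hence "f (Suc k) = f k * r" using a0 by simp
    with Suc show ?case by (simp add: mult.assoc power_commutes)
  qed simp
  assume "(- (inverse \<alpha> * \<beta>)) ^ n = 1"
  moreover have "- (inverse \<alpha> * \<beta>) = inverse \<alpha> * r * \<alpha>"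
    using a0 by (simp add: r_def mult.assoc)
  ultimately have "inverse \<alpha> * r ^ n * \<alpha> = 1" using conj_pow[OF a0] by simp
  hence "\<alpha> * (inverse \<alpha> * r ^ n * \<alpha>) * inverse \<alpha> = 1" using a0 by simp
  hence rn: "r ^ n = 1" using a0 by (metis mult.assoc left_inverse mult_1_left right_inverse mult_1_right)
  have "r ^ (n - 1) * r = r ^ n" using n1 by (metis Suc_diff_le diff_Suc_1 power_Suc2)
  hence e1: "r ^ n * \<alpha> = r ^ (n - 1) * (r * \<alpha>)" by (metis mult.assoc)
  have "f 0 * \<alpha> + f (n - 1) * \<beta> = f 0 * (1 - r ^ n) * \<alpha>"
    using fk[of "n - 1"] n1 be e1 by (simp add: algebra_simps)
  with b rn show False by simp
qed

lemma rec_inf_left: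
  fixes f e :: "nat \<Rightarrow> 'k::division_ring"
  assumes a0: "\<alpha> \<noteq> 0" and b0: "\<beta> \<noteq> 0"
    and sf: "\<And>k. \<alpha> * f (Suc k) + \<beta> * f k = 0"
    and se: "\<And>m. \<alpha> * e (Suc m) + \<beta> * e (Suc (Suc m)) = 0"
    and b: "\<alpha> * f 0 + \<beta> * e 1 = 1"
  shows "(\<forall>k. f k \<noteq> 0) \<or> (\<forall>m. e (Suc m) \<noteq> 0)"
proof -
  have "f 0 \<noteq> 0 \<or> e 1 \<noteq> 0" using b by auto
  moreover have "f k \<noteq> 0" if "f 0 \<noteq> 0" for k
  proof (induction k)
    case (Suc k) thus ?case using sf[of k] b0 by auto
  qed (use that in auto)
  moreover have "e (Suc m) \<noteq> 0" if "e 1 \<noteq> 0" for m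
  proof (induction m)
    case (Suc m) thus ?case using se[of m] a0 by auto
  qed (use that in auto)
  ultimately show ?thesis by blast
qed

lemma rec_inf_right:
  fixes f e :: "nat \<Rightarrow> 'k::division_ring"
  assumes a0: "\<alpha> \<noteq> 0" and b0: "\<beta> \<noteq> 0"
    and sf: "\<And>k. f (Suc k) * \<alpha> + f k * \<beta> = 0"
    and se: "\<And>m. e (Suc m) * \<alpha> + e (Suc (Suc m)) * \<beta> = 0"
    and b: "f 0 * \<alpha> + e 1 * \<beta> = 1"
  shows "(\<forall>k. f k \<noteq> 0) \<or> (\<forall>m. e (Suc m) \<noteq> 0)"
proof -
  have "f 0 \<noteq> 0 \<or> e 1 \<noteq> 0" using b by auto
  moreover have "f k \<noteq> 0" if "f 0 \<noteq> 0" for k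
  proof (induction k)
    case (Suc k) thus ?case using sf[of k] b0 by auto
  qed (use that in auto)
  moreover have "e (Suc m) \<noteq> 0" if "e 1 \<noteq> 0" for m
  proof (induction m)
    case (Suc m) thus ?case using se[of m] a0 by auto
  qed (use that in auto)
  ultimately show ?thesis by blast
qed




context group begin

lemma gr_supp_of: "gr_supp (gr_of c g) = (if c = 0 then {} else {g})"
  by (auto simp: gr_supp_def gr_of_def)

lemma gr_one_val: "gr_one G z = (if z = \<one> then 1 else 0)"
  by (simp add: gr_one_def gr_of_def)

lemma mult_F:
  assumes "gr_supp a \<subseteq> F" "finite F"
  shows "gr_mult G a b z = (if z \<in> carrier G then (\<Sum>x\<in>F. a x * b (inv x \<otimes> z)) else 0)"
  unfolding gr_mult_def using assms
  by (auto intro!: sum.mono_neutral_left simp: gr_supp_def)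

lemma mult_F_right:
  assumes b: "gr_elem G b" and F: "gr_supp a \<subseteq> F" "finite F" "F \<subseteq> carrier G"
    and z: "z \<in> carrier G"
  shows "gr_mult G b a z = (\<Sum>u\<in>F. b (z \<otimes> inv u) * a u)"
proof -
  define \<phi> where "\<phi> = (\<lambda>u. z \<otimes> inv u)"
  have fb: "finite (gr_supp b)" and sb: "gr_supp b \<subseteq> carrier G" using b by (auto simp: gr_elem_def)
  have inj: "inj_on \<phi> F"
    unfolding \<phi>_def inj_on_def using F z by (metis inv_closed inv_inv Units_eq Units_l_cancel subsetD)
  have "gr_mult G b a z = (\<Sum>x\<in>gr_supp b. b x * a (inv x \<otimes> z))"
    using z by (simp add: gr_mult_def)
  also have "\<dots> = (\<Sum>x\<in>gr_supp b \<inter> \<phi> ` F. b x * a (inv x \<otimes> z))"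
  proof (rule sum.mono_neutral_right[OF fb], blast, rule ballI)
    fix x assume x: "x \<in> gr_supp b - gr_supp b \<inter> \<phi> ` F"
    hence xc: "x \<in> carrier G" using sb by auto
    have "inv x \<otimes> z \<notin> F"
    proof
      assume "inv x \<otimes> z \<in> F"
      moreover have "\<phi> (inv x \<otimes> z) = x" unfolding \<phi>_def using xc z
        by (simp add: inv_mult_group m_assoc[symmetric])
      ultimately show False using x by (metis DiffE IntI image_eqI)
    qed
    hence "a (inv x \<otimes> z) = 0" using F(1) by (auto simp: gr_supp_def)
    thus "b x * a (inv x \<otimes> z) = 0" by simp
  qed
  also have "\<dots> = (\<Sum>x\<in>\<phi> ` F. b x * a (inv x \<otimes> z))"
    by (rule sum.mono_neutral_left) (use F in \<open>auto simp: gr_supp_def\<close>)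
  also have "\<dots> = (\<Sum>u\<in>F. b (\<phi> u) * a (inv (\<phi> u) \<otimes> z))"
    by (simp add: sum.reindex[OF inj])
  also have "\<dots> = (\<Sum>u\<in>F. b (z \<otimes> inv u) * a u)"
  proof (rule sum.cong[OF refl])
    fix u assume "u \<in> F" hence u: "u \<in> carrier G" using F by auto
    have "inv (z \<otimes> inv u) \<otimes> z = u" using u z
      by (simp add: inv_mult_group m_assoc)
    thus "b (\<phi> u) * a (inv (\<phi> u) \<otimes> z) = b (z \<otimes> inv u) * a u" by (simp add: \<phi>_def)
  qed
  finally show ?thesis .
qed

lemma gr_elem_mult:
  assumes a: "gr_elem G a" and b: "gr_elem G b"
  shows "gr_elem G (gr_mult G a b)"
proof -
  have sub: "gr_supp (gr_mult G a b) \<subseteq> (\<lambda>(x, y). x \<otimes> y) ` (gr_supp a \<times> gr_supp b)"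
  proof
    fix z assume z: "z \<in> gr_supp (gr_mult G a b)"
    hence zc: "z \<in> carrier G" and ne: "(\<Sum>x\<in>gr_supp a. a x * b (inv x \<otimes> z)) \<noteq> 0"
      by (auto simp: gr_supp_def gr_mult_def split: if_splits)
    then obtain x where x: "x \<in> gr_supp a" "a x * b (inv x \<otimes> z) \<noteq> 0"
      by (meson sum.not_neutral_contains_not_neutral)
    hence xc: "x \<in> carrier G" using a by (auto simp: gr_elem_def)
    have "inv x \<otimes> z \<in> gr_supp b" using x by (auto simp: gr_supp_def)
    moreover have "z = x \<otimes> (inv x \<otimes> z)" using xc zc by (simp add: m_assoc[symmetric])
    ultimately show "z \<in> (\<lambda>(x, y). x \<otimes> y) ` (gr_supp a \<times> gr_supp b)"
      using x(1) by force
  qed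
  have "finite (gr_supp (gr_mult G a b))"
    by (rule finite_subset[OF sub]) (use a b in \<open>auto simp: gr_elem_def\<close>)
  moreover have "gr_supp (gr_mult G a b) \<subseteq> carrier G"
    by (auto simp: gr_supp_def gr_mult_def)
  ultimately show ?thesis by (simp add: gr_elem_def)
qed

lemma inf_orbit:
  assumes h: "h \<in> carrier G" and c: "c \<in> carrier G" and o: "ord h = 0"
    and nz: "\<And>k. b (h [^] Suc k \<otimes> c) \<noteq> 0"
  shows "infinite (gr_supp b)"
proof
  assume fin: "finite (gr_supp b)"
  have "range (\<lambda>k. h [^] Suc k \<otimes> c) \<subseteq> gr_supp b" using nz by (auto simp: gr_supp_def)
  hence "finite (range (\<lambda>k. h [^] Suc k \<otimes> c))" using fin finite_subset by blast
  moreover have "inj (\<lambda>k::nat. h [^] Suc k \<otimes> c)"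
  proof (rule injI)
    fix i j :: nat assume "h [^] Suc i \<otimes> c = h [^] Suc j \<otimes> c"
    hence e: "h [^] Suc i = h [^] Suc j" using h c by (meson nat_pow_closed right_cancel)
    have "h [^] (Suc i - Suc j) = \<one>" using pow_eq_div2[OF h e] .
    moreover have "h [^] (Suc j - Suc i) = \<one>" using pow_eq_div2[OF h e[symmetric]] .
    ultimately have "Suc i - Suc j = 0" "Suc j - Suc i = 0" using ord_eq_0[OF h] o by blast+
    thus "i = j" by simp
  qed
  ultimately show False using finite_imageD by (metis infinite_UNIV_nat)
qed

end



context group begin

lemma inv_l_eq: "g \<in> carrier G \<Longrightarrow> t \<in> carrier G \<Longrightarrow> w \<in> carrier G \<Longrightarrow>
  (inv g \<otimes> t = w) = (t = g \<otimes> w)"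
  by (auto simp add: m_assoc[symmetric])

lemma inv_r_eq: "g \<in> carrier G \<Longrightarrow> t \<in> carrier G \<Longrightarrow> w \<in> carrier G \<Longrightarrow>
  (t \<otimes> inv g = w) = (t = w \<otimes> g)"
  by (auto simp add: m_assoc)

lemma pow_comm1: "g \<in> carrier G \<Longrightarrow> g [^] (j::nat) \<otimes> g = g \<otimes> g [^] j"
  by (metis nat_pow_Suc nat_pow_Suc2)

definition Ssum :: "'k::division_ring \<Rightarrow> 'a \<Rightarrow> 'a \<Rightarrow> 'k" where
  "Ssum r g t = (\<Sum>i<ord g. gr_of (r ^ i) (g [^] i) t)"

lemma Ssum_pow:
  assumes g: "g \<in> carrier G" and i: "i < ord g"
  shows "Ssum r g (g [^] i) = r ^ i"
proof -
  have "Ssum r g (g [^] i) = (\<Sum>j<ord g. if j = i then r ^ j else 0)"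
    unfolding Ssum_def gr_of_def
  proof (rule sum.cong[OF refl])
    fix j assume j: "j \<in> {..<ord g}"
    have "(g [^] i = g [^] j) = (j = i)"
      using ord_inj[OF g] i j unfolding inj_on_def by fastforce
    thus "(if g [^] i = g [^] j then r ^ j else 0) = (if j = i then r ^ j else 0)" by simp
  qed
  also have "\<dots> = r ^ i" using i by simp
  finally show ?thesis .
qed

lemma Ssum_out:
  assumes "\<And>i. i < ord g \<Longrightarrow> t \<noteq> g [^] i"
  shows "Ssum r g t = 0"
  unfolding Ssum_def gr_of_def using assms by (auto intro!: sum.neutral)

lemma Ssum_comm: "Ssum r g t * r = r * Ssum r g t"
  unfolding Ssum_def gr_of_def
  by (simp add: sum_distrib_left sum_distrib_right, rule sum.cong, auto simp: power_commutes)

lemma inv_pow_pred: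
  assumes g: "g \<in> carrier G" and n: "ord g \<ge> 1"
  shows "inv g = g [^] (ord g - 1)"
proof -
  have "g [^] (ord g - 1) \<otimes> g = g [^] ord g"
    using n by (metis Suc_diff_le diff_Suc_1 nat_pow_Suc)
  hence "g [^] (ord g - 1) \<otimes> g = \<one>" using g by simp
  thus ?thesis using g by (metis inv_equality nat_pow_closed)
qed

lemma Ssum_K1:
  assumes g: "g \<in> carrier G" and n: "ord g > 1" and t: "t \<in> carrier G"
  shows "Ssum r g t - r * Ssum r g (inv g \<otimes> t) = (if t = \<one> then 1 - r ^ ord g else 0)"
proof (cases "\<exists>i<ord g. t = g [^] i")
  case True
  then obtain i where i: "i < ord g" "t = g [^] i" by blast
  show ?thesis
  proof (cases i)
    case 0
    have "inv g \<otimes> t = g [^] (ord g - 1)" using i 0 g n inv_pow_pred by simp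
    moreover have "r * r ^ (ord g - 1) = r ^ ord g" using n
      by (metis Suc_diff_1 less_trans zero_less_one power_Suc)
    moreover have "Ssum r g \<one> = 1" using Ssum_pow[of g 0 r] g n by simp
    moreover have "Ssum r g (g [^] (ord g - 1)) = r ^ (ord g - 1)" using Ssum_pow[of g "ord g - 1" r] g n by simp
    ultimately show ?thesis using i 0 by simp
  next
    case (Suc j)
    have "inv g \<otimes> t = g [^] j" using i Suc g
      by (simp add: inv_l_eq pow_comm1)
    moreover have "t \<noteq> \<one>"
    proof
      assume "t = \<one>"
      hence "g [^] Suc j = \<one>" using i Suc by simp
      hence "ord g dvd Suc j" using pow_eq_id g by blast
      thus False using i Suc by (simp add: nat_dvd_not_less)
    qed
    ultimately show ?thesis using i Suc g Ssum_pow[of g i r] Ssum_pow[of g j r] by simp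
  qed
next
  case False
  hence t1: "t \<noteq> \<one>" using n by (metis less_trans nat_pow_0 zero_less_one)
  have "inv g \<otimes> t \<noteq> g [^] j" if j: "j < ord g" for j
  proof
    assume "inv g \<otimes> t = g [^] j"
    hence "t = g [^] Suc j" using g t using pow_comm1[OF g, of j] by (simp add: inv_l_eq)
    moreover have "Suc j \<le> ord g" using j by simp
    ultimately show False using False t1 g
      by (metis le_neq_implies_less pow_ord_eq_1)
  qed
  thus ?thesis using False t1 Ssum_out[of g t r] Ssum_out[of g "inv g \<otimes> t" r] by auto
qed

lemma Ssum_swap:
  assumes g: "g \<in> carrier G" and t: "t \<in> carrier G"
  shows "Ssum r g (t \<otimes> inv g) = Ssum r g (inv g \<otimes> t)"
  unfolding Ssum_def gr_of_def
proof (rule sum.cong[OF refl])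
  fix j :: nat
  have "(t \<otimes> inv g = g [^] j) = (t = g [^] j \<otimes> g)" using g t
    using inv_r_eq[of g t "g [^] j"] nat_pow_closed[OF g, of j] g t by blast
  moreover have "(inv g \<otimes> t = g [^] j) = (t = g \<otimes> g [^] j)" using g t
    by (simp add: inv_l_eq)
  moreover have "g [^] j \<otimes> g = g \<otimes> g [^] j" using g by (metis nat_pow_Suc nat_pow_Suc2)
  ultimately show "(if t \<otimes> inv g = g [^] j then r ^ j else 0) = (if inv g \<otimes> t = g [^] j then r ^ j else 0)"
    by simp
qed

end



context group begin

lemma A_val:
  assumes h: "h \<in> carrier G"
  shows "gr_mult G (gr_of s h) (gr_minus (gr_one G) (gr_of r g)) z =
    (if z \<in> carrier G then s * ((if inv h \<otimes> z = \<one> then 1 else 0) - (if inv h \<otimes> z = g then r else 0)) else 0)"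
proof -
  have "gr_supp (gr_of s h) \<subseteq> {h}" by (simp add: gr_supp_of)
  from mult_F[OF this] show ?thesis
    by (simp add: gr_minus_def gr_one_val gr_of_def)
qed

lemma gr_elem_of: "g \<in> carrier G \<Longrightarrow> gr_elem G (gr_of c g)"
  by (simp add: gr_elem_def gr_supp_of)

lemma gr_elem_Ssum:
  assumes g: "g \<in> carrier G"
  shows "gr_elem G (Ssum r g)"
proof -
  have "gr_supp (Ssum r g) \<subseteq> (\<lambda>i. g [^] i) ` {..<ord g}"
    using Ssum_out[of g _ r] by (force simp: gr_supp_def)
  moreover have "(\<lambda>i. g [^] i) ` {..<ord g} \<subseteq> carrier G" using g by auto
  ultimately show ?thesis unfolding gr_elem_def using finite_subset by blast
qed

lemma explicit_inverse:
  fixes r s :: "'k::division_ring"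
  assumes g: "g \<in> carrier G" and h: "h \<in> carrier G" and s: "s \<noteq> 0"
    and n: "ord g > 1" and rn: "r ^ ord g \<noteq> 1"
  defines "A \<equiv> gr_mult G (gr_of s h) (gr_minus (gr_one G) (gr_of r g))"
    and "b \<equiv> gr_mult G (gr_mult G (gr_of (inverse (1 - r ^ ord g)) \<one>) (Ssum r g))
                       (gr_of (inverse s) (inv h))"
  shows "gr_elem G b \<and> gr_mult G A b = gr_one G \<and> gr_mult G b A = gr_one G"
proof -
  define c where "c = inverse (1 - r ^ ord g)"
  have c1: "c * (1 - r ^ ord g) = 1" using rn by (simp add: c_def)
  have rc: "r * c = c * r"
  proof -
    define d where "d = 1 - r ^ ord g"
    have d0: "d \<noteq> 0" using rn by (simp add: d_def)
    have rd: "r * d = d * r" by (simp add: d_def algebra_simps power_commutes)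
    have "r * inverse d = (inverse d * d) * r * inverse d" using d0 by simp
    also have "\<dots> = inverse d * (d * r) * inverse d" by (simp only: mult.assoc)
    also have "\<dots> = inverse d * (r * d) * inverse d" by (simp only: rd)
    also have "\<dots> = inverse d * r * (d * inverse d)" by (simp only: mult.assoc)
    also have "\<dots> = inverse d * r" using d0 by simp
    finally show ?thesis by (simp add: c_def d_def)
  qed
  have rc': "r * (c * Y) = c * (r * Y)" for Y using rc by (metis mult.assoc)
  define P where "P = gr_mult G (gr_of c \<one>) (Ssum r g)"
  have eP: "gr_elem G P" unfolding P_def
    by (rule gr_elem_mult[OF gr_elem_of gr_elem_Ssum[OF g]]) simp
  have Pv: "P z = (if z \<in> carrier G then c * Ssum r g z else 0)" for z
  proof -
    have "gr_supp (gr_of c \<one>) \<subseteq> {\<one>}" by (simp add: gr_supp_of)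
    from mult_F[OF this] show ?thesis unfolding P_def by (simp add: gr_of_def)
  qed
  have bP: "b = gr_mult G P (gr_of (inverse s) (inv h))" unfolding b_def P_def c_def ..
  have bv: "b z = (if z \<in> carrier G then c * Ssum r g (z \<otimes> h) * inverse s else 0)" for z
  proof (cases "z \<in> carrier G")
    case True
    have "gr_supp (gr_of (inverse s) (inv h)) \<subseteq> {inv h}" by (simp add: gr_supp_of)
    from mult_F_right[OF eP this] True h
    show ?thesis unfolding bP by (simp add: gr_of_def Pv)
  next
    case False thus ?thesis unfolding bP by (simp add: gr_mult_def)
  qed
  have eb: "gr_elem G b" unfolding bP by (rule gr_elem_mult[OF eP gr_elem_of]) (simp add: h)
  have g1: "g \<noteq> \<one>" using n ord_eq_1[OF g] by auto
  have hg: "h \<noteq> h \<otimes> g" using g h g1 by simp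
  have Av: "A z = (if z \<in> carrier G then s * ((if inv h \<otimes> z = \<one> then 1 else 0) - (if inv h \<otimes> z = g then r else 0)) else 0)" for z
    unfolding A_def by (rule A_val[OF h])
  have suppA: "gr_supp A \<subseteq> {h, h \<otimes> g}"
  proof
    fix z assume "z \<in> gr_supp A"
    hence z: "z \<in> carrier G" and "inv h \<otimes> z = \<one> \<or> inv h \<otimes> z = g"
      by (auto simp: gr_supp_def Av split: if_splits)
    thus "z \<in> {h, h \<otimes> g}" using h g by (auto simp: inv_l_eq)
  qed
  have Ah: "A h = s" using h g1 by (simp add: Av)
  have Ahg: "A (h \<otimes> g) = - (s * r)" using h g g1 by (simp add: Av m_assoc[symmetric])
  have isr: "inverse s * (s * r) = r" using s by (simp add: mult.assoc[symmetric])
  have left: "gr_mult G A b = gr_one G"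
  proof
    fix z show "gr_mult G A b z = gr_one G z"
    proof (cases "z \<in> carrier G")
      case False
      thus ?thesis by (auto simp: gr_mult_def gr_one_val)
    next
      case z: True
      define t where "t = inv h \<otimes> z \<otimes> h"
      have t: "t \<in> carrier G" using z h by (simp add: t_def)
      have t1: "(t = \<one>) = (z = \<one>)" unfolding t_def using z h
        by (simp add: m_assoc inv_l_eq)
      have e1: "b (inv h \<otimes> z) = c * Ssum r g t * inverse s" using z h by (simp add: bv t_def)
      have e2: "b (inv (h \<otimes> g) \<otimes> z) = c * Ssum r g (inv g \<otimes> t) * inverse s"
        using z h g by (simp add: bv t_def inv_mult_group m_assoc)
      have "gr_mult G A b z = s * b (inv h \<otimes> z) + (- (s * r)) * b (inv (h \<otimes> g) \<otimes> z)"
        using mult_F[OF suppA] z hg Ah Ahg by simp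
      also have "\<dots> = s * (c * (Ssum r g t - r * Ssum r g (inv g \<otimes> t))) * inverse s"
        unfolding e1 e2 by (simp add: algebra_simps rc')
      also have "\<dots> = gr_one G z"
        using Ssum_K1[OF g n t, of r] t1 c1 s by (simp add: gr_one_val)
      finally show ?thesis .
    qed
  qed
  have right: "gr_mult G b A = gr_one G"
  proof
    fix z show "gr_mult G b A z = gr_one G z"
    proof (cases "z \<in> carrier G")
      case False
      thus ?thesis by (auto simp: gr_mult_def gr_one_val)
    next
      case z: True
      have e1: "b (z \<otimes> inv h) = c * Ssum r g z * inverse s" using z h by (simp add: bv m_assoc)
      have e2: "b (z \<otimes> inv (h \<otimes> g)) = c * Ssum r g (inv g \<otimes> z) * inverse s"
        using z h g by (simp add: bv inv_mult_group m_assoc Ssum_swap)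
      have "gr_mult G b A z = b (z \<otimes> inv h) * s + b (z \<otimes> inv (h \<otimes> g)) * (- (s * r))"
        using mult_F_right[OF eb suppA _ _ z] z h g hg Ah Ahg by simp
      also have "\<dots> = c * (Ssum r g z - Ssum r g (inv g \<otimes> z) * r)"
        unfolding e1 e2 using s by (simp add: algebra_simps isr)
      also have "\<dots> = c * (Ssum r g z - r * Ssum r g (inv g \<otimes> z))" by (simp add: Ssum_comm)
      also have "\<dots> = gr_one G z"
        using Ssum_K1[OF g n z, of r] c1 by (simp add: gr_one_val)
      finally show ?thesis .
    qed
  qed
  show ?thesis using eb left right by blast
qed

end



context group begin

lemma cancel_r1: "a \<in> carrier G \<Longrightarrow> x \<in> carrier G \<Longrightarrow> a \<otimes> inv x \<otimes> x = a"
  by (simp add: m_assoc)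
lemma cancel_r2: "a \<in> carrier G \<Longrightarrow> x \<in> carrier G \<Longrightarrow> a \<otimes> x \<otimes> inv x = a"
  by (simp add: m_assoc)

lemma conj_one: "x \<in> carrier G \<Longrightarrow> u \<in> carrier G \<Longrightarrow> (x \<otimes> u \<otimes> inv x = \<one>) = (u = \<one>)"
  using inv_r_eq[of x "x \<otimes> u" \<one>] by simp

lemma core:
  fixes a :: "'a \<Rightarrow> 'k::division_ring"
  assumes a: "gr_elem G a" and rk: "gr_rank a = 2" and osi: "gr_one_sided_invertible G a"
  shows "\<exists>s r g h. s \<noteq> 0 \<and> r \<noteq> 0 \<and> g \<in> carrier G \<and> h \<in> carrier G \<and>
              ord g > 1 \<and> r ^ ord g \<noteq> 1 \<and>
              a = gr_mult G (gr_of s h) (gr_minus (gr_one G) (gr_of r g))"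
proof -
  obtain x y where sxy: "gr_supp a = {x, y}" and xy: "x \<noteq> y"
    using rk unfolding gr_rank_def by (meson card_2_iff)
  have x: "x \<in> carrier G" and y0: "y \<in> carrier G" using a sxy by (auto simp: gr_elem_def)
  define \<alpha> where "\<alpha> = a x"
  define \<beta> where "\<beta> = a y"
  have a0: "\<alpha> \<noteq> 0" and b0: "\<beta> \<noteq> 0" using sxy by (auto simp: gr_supp_def \<alpha>_def \<beta>_def)
  define g where "g = inv x \<otimes> y"
  have g: "g \<in> carrier G" using x y0 by (simp add: g_def)
  have yg: "y = x \<otimes> g" using x y0 by (simp add: g_def m_assoc[symmetric])
  have g1: "g \<noteq> \<one>" using xy yg x by auto
  define r where "r = - (inverse \<alpha> * \<beta>)"
  have r0: "r \<noteq> 0" using a0 b0 by (simp add: r_def)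
  have rep: "a = gr_mult G (gr_of \<alpha> x) (gr_minus (gr_one G) (gr_of r g))"
  proof
    fix z
    show "a z = gr_mult G (gr_of \<alpha> x) (gr_minus (gr_one G) (gr_of r g)) z"
    proof (cases "z \<in> carrier G")
      case False
      hence "a z = 0" using a by (auto simp: gr_elem_def gr_supp_def)
      thus ?thesis using False A_val[OF x, of \<alpha> r g z] by simp
    next
      case z: True
      have e1: "(inv x \<otimes> z = \<one>) = (z = x)" using inv_l_eq[OF x z, of \<one>] x by auto
      have e2: "(inv x \<otimes> z = g) = (z = y)" using inv_l_eq[OF x z g] yg by auto
      have "\<alpha> * (- r) = \<beta>" using a0 by (simp add: r_def mult.assoc[symmetric])
      moreover have "z \<noteq> x \<Longrightarrow> z \<noteq> y \<Longrightarrow> a z = 0" using sxy by (auto simp: gr_supp_def)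
      ultimately show ?thesis using z A_val[OF x, of \<alpha> r g z] e1 e2 xy g1 yg
        by (auto simp: \<alpha>_def \<beta>_def)
    qed
  qed
  obtain b where eb: "gr_elem G b" and ab: "gr_mult G a b = gr_one G \<or> gr_mult G b a = gr_one G"
    using osi unfolding gr_one_sided_invertible_def by blast
  define F where "F u = b (u \<otimes> inv x)" for u
  have fa: "finite {x, y}" "{x, y} \<subseteq> carrier G" using x y0 by auto
  have Leq: "\<alpha> * F u + \<beta> * F (inv g \<otimes> u) = (if u = \<one> then 1 else 0)"
    if ab1: "gr_mult G a b = gr_one G" and u: "u \<in> carrier G" for u
  proof -
    define z where "z = x \<otimes> u \<otimes> inv x"
    have z: "z \<in> carrier G" using x u by (simp add: z_def)
    have m1: "gr_mult G a b z = a x * b (inv x \<otimes> z) + a y * b (inv y \<otimes> z)"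
      using mult_F[of a "{x,y}" b z] sxy z xy by simp
    have e1: "inv x \<otimes> z = u \<otimes> inv x" using x u by (simp add: z_def m_assoc[symmetric])
    have e2: "inv y \<otimes> z = inv g \<otimes> u \<otimes> inv x" using x u g
      by (simp add: z_def yg inv_mult_group m_assoc[symmetric] cancel_r1)
    have e3: "gr_one G z = (if u = \<one> then 1 else 0)" using conj_one[OF x u]
      by (simp add: gr_one_val z_def)
    have "\<alpha> * F u + \<beta> * F (inv g \<otimes> u) = gr_mult G a b z"
      unfolding F_def \<alpha>_def \<beta>_def m1 e1 e2 ..
    also have "\<dots> = gr_one G z" using ab1 by simp
    finally show ?thesis using e3 by simp
  qed
  have Req: "F u * \<alpha> + F (u \<otimes> inv g) * \<beta> = (if u = \<one> then 1 else 0)"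
    if ba1: "gr_mult G b a = gr_one G" and u: "u \<in> carrier G" for u
  proof -
    have m1: "gr_mult G b a u = b (u \<otimes> inv x) * a x + b (u \<otimes> inv y) * a y"
      using mult_F_right[OF eb _ fa u] sxy xy by simp
    have e2: "u \<otimes> inv y = u \<otimes> inv g \<otimes> inv x" using x u g
      by (simp add: yg inv_mult_group m_assoc)
    have "F u * \<alpha> + F (u \<otimes> inv g) * \<beta> = gr_mult G b a u"
      unfolding F_def \<alpha>_def \<beta>_def m1 e2 ..
    also have "\<dots> = gr_one G u" using ba1 by simp
    finally show ?thesis by (simp add: gr_one_val)
  qed
  have P1: "inv g \<otimes> g [^] Suc k = g [^] k" for k :: nat
    using g by (simp add: inv_l_eq pow_comm1)
  have P1': "g [^] Suc k \<otimes> inv g = g [^] k" for k :: nat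
    using g by (simp add: cancel_r2)
  have P2: "inv g \<otimes> inv g [^] Suc m = inv g [^] Suc (Suc m)" for m :: nat
    using nat_pow_Suc2[OF inv_closed[OF g], of "Suc m"] by (rule sym)
  have P2': "inv g [^] Suc m \<otimes> inv g = inv g [^] Suc (Suc m)" for m :: nat
    by simp
  have Gi: "inv g [^] Suc 0 = inv g" using g by simp
  have on0: "ord g \<noteq> 0"
  proof
    assume o: "ord g = 0"
    have ne1: "g [^] Suc k \<noteq> \<one>" for k :: nat using ord_eq_0[OF g] o by blast
    have ne2a: "\<forall>n::nat. n \<noteq> 0 \<longrightarrow> inv g [^] n \<noteq> \<one>" using ord_eq_0[of "inv g"] o g by simp
    have ne2: "inv g [^] Suc k \<noteq> \<one>" for k :: nat using ne2a by (metis nat.distinct(1))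
    define f where "f k = F (g [^] k)" for k :: nat
    define e where "e k = F (inv g [^] k)" for k :: nat
    have alt: "(\<forall>k. f k \<noteq> 0) \<or> (\<forall>m. e (Suc m) \<noteq> 0)"
      using ab
    proof
      assume ab1: "gr_mult G a b = gr_one G"
      show ?thesis
      proof (rule rec_inf_left[OF a0 b0])
        fix k show "\<alpha> * f (Suc k) + \<beta> * f k = 0"
          using Leq[OF ab1, of "g [^] Suc k"] g ne1[of k] by (simp add: f_def P1[simplified])
      next
        fix m show "\<alpha> * e (Suc m) + \<beta> * e (Suc (Suc m)) = 0"
          using Leq[OF ab1, of "inv g [^] Suc m"] g ne2[of m] by (simp add: e_def P2[simplified])
      next
        show "\<alpha> * f 0 + \<beta> * e 1 = 1"
          using Leq[OF ab1, of \<one>] g by (simp add: f_def e_def)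
      qed
    next
      assume ba1: "gr_mult G b a = gr_one G"
      show ?thesis
      proof (rule rec_inf_right[OF a0 b0])
        fix k show "f (Suc k) * \<alpha> + f k * \<beta> = 0"
          using Req[OF ba1, of "g [^] Suc k"] g ne1[of k] by (simp add: f_def P1'[simplified])
      next
        fix m show "e (Suc m) * \<alpha> + e (Suc (Suc m)) * \<beta> = 0"
          using Req[OF ba1, of "inv g [^] Suc m"] g ne2[of m] by (simp add: e_def P2'[simplified])
      next
        show "f 0 * \<alpha> + e 1 * \<beta> = 1"
          using Req[OF ba1, of \<one>] g by (simp add: f_def e_def)
      qed
    qed
    have fin: "finite (gr_supp b)" using eb by (simp add: gr_elem_def)
    show False
    proof (cases "\<forall>k. f k \<noteq> 0")
      case True
      hence "\<And>k. b (g [^] Suc k \<otimes> inv x) \<noteq> 0" unfolding f_def F_def by blast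
      from inf_orbit[of g "inv x" b, OF g _ o this] x fin show False by simp
    next
      case False
      hence "\<And>k. b (inv g [^] Suc k \<otimes> inv x) \<noteq> 0" using alt unfolding e_def F_def by blast
      from inf_orbit[of "inv g" "inv x" b, OF _ _ _ this] x g o fin show False by simp
    qed
  qed
  have on1: "ord g \<noteq> 1" using ord_eq_1[OF g] g1 by simp
  define n where "n = ord g"
  have n1: "n \<ge> 1" using on0 by (simp add: n_def)
  have ne1: "g [^] Suc k \<noteq> \<one>" if "Suc k < n" for k :: nat
  proof
    assume "g [^] Suc k = \<one>"
    hence "n dvd Suc k" using pow_eq_id[OF g, of "Suc k"] by (simp add: n_def)
    thus False using that by (simp add: nat_dvd_not_less)
  qed
  have ig: "inv g = g [^] (n - 1)" using inv_pow_pred[OF g] n1 by (simp add: n_def)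
  define f where "f k = F (g [^] k)" for k :: nat
  have "r ^ n \<noteq> 1"
    using ab
  proof
    assume ab1: "gr_mult G a b = gr_one G"
    show ?thesis unfolding r_def
    proof (rule rec_fin_left[OF a0 n1])
      fix k assume "Suc k < n" thus "\<alpha> * f (Suc k) + \<beta> * f k = 0"
        using Leq[OF ab1, of "g [^] Suc k"] g ne1[of k] by (simp add: f_def P1[simplified])
    next
      show "\<alpha> * f 0 + \<beta> * f (n - 1) = 1"
        using Leq[OF ab1, of \<one>] g by (simp add: f_def ig)
    qed
  next
    assume ba1: "gr_mult G b a = gr_one G"
    show ?thesis unfolding r_def
    proof (rule rec_fin_right[OF a0 n1])
      fix k assume "Suc k < n" thus "f (Suc k) * \<alpha> + f k * \<beta> = 0"
        using Req[OF ba1, of "g [^] Suc k"] g ne1[of k] by (simp add: f_def P1'[simplified])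
    next
      show "f 0 * \<alpha> + f (n - 1) * \<beta> = 1"
        using Req[OF ba1, of \<one>] g by (simp add: f_def ig)
    qed
  qed
  thus ?thesis using a0 r0 g x on0 on1 rep unfolding n_def
    by (intro exI[of _ \<alpha>] exI[of _ r] exI[of _ g] exI[of _ x]) auto
qed

end

context group begin

lemma main:
  fixes dummy :: "'k::division_ring"
  shows
    "(\<forall>a :: 'a \<Rightarrow> 'k. gr_elem G a \<and> gr_rank a = 2 \<and> gr_one_sided_invertible G a
         \<longrightarrow> gr_invertible G a)
   \<and> (\<forall>a :: 'a \<Rightarrow> 'k. gr_elem G a \<and> gr_rank a = 2 \<longrightarrow>
         (gr_invertible G a \<longleftrightarrow>
           (\<exists>s r g h. s \<noteq> 0 \<and> r \<noteq> 0 \<and> g \<in> carrier G \<and> h \<in> carrier G \<and>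
              group.ord G g > 1 \<and> r ^ group.ord G g \<noteq> 1 \<and>
              a = gr_mult G (gr_of s h) (gr_minus (gr_one G) (gr_of r g)))))
   \<and> (\<forall>(a :: 'a \<Rightarrow> 'k) s r g h. gr_elem G a \<and> gr_rank a = 2 \<and>
         s \<noteq> 0 \<and> r \<noteq> 0 \<and> g \<in> carrier G \<and> h \<in> carrier G \<and>
         group.ord G g > 1 \<and> r ^ group.ord G g \<noteq> 1 \<and>
         a = gr_mult G (gr_of s h) (gr_minus (gr_one G) (gr_of r g)) \<longrightarrow>
         (let n = group.ord G g;
              b = gr_mult G
                    (gr_mult G (gr_of (inverse (1 - r ^ n)) \<one>\<^bsub>G\<^esub>)
                       (\<lambda>z. \<Sum>i<n. gr_of (r ^ i) (g [^]\<^bsub>G\<^esub> i) z))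
                    (gr_of (inverse s) (inv\<^bsub>G\<^esub> h))
          in gr_elem G b \<and> gr_mult G a b = gr_one G \<and> gr_mult G b a = gr_one G))"
proof -
  have SS: "(\<lambda>z. \<Sum>i<ord g. gr_of (r ^ i) (g [^] i) z) = Ssum r g" for r :: 'k and g
    by (rule ext) (simp add: Ssum_def)
  have P3: "gr_elem G b \<and> gr_mult G (gr_mult G (gr_of s h) (gr_minus (gr_one G) (gr_of r g))) b = gr_one G
       \<and> gr_mult G b (gr_mult G (gr_of s h) (gr_minus (gr_one G) (gr_of r g))) = gr_one G"
    if "s \<noteq> 0" "g \<in> carrier G" "h \<in> carrier G" "ord g > 1" "r ^ ord g \<noteq> 1"
       "b = gr_mult G (gr_mult G (gr_of (inverse (1 - r ^ ord g)) \<one>)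
                       (\<lambda>z. \<Sum>i<ord g. gr_of (r ^ i) (g [^] i) z)) (gr_of (inverse s) (inv h))"
    for s r :: 'k and g h b
    using explicit_inverse[OF that(2,3,1,4,5)] that(6) by (simp add: SS)
  have inv3: "gr_invertible G (gr_mult G (gr_of s h) (gr_minus (gr_one G) (gr_of r g)))"
    if "s \<noteq> 0" "g \<in> carrier G" "h \<in> carrier G" "ord g > 1" "r ^ ord g \<noteq> 1"
    for s r :: 'k and g h
    unfolding gr_invertible_def using P3[OF that refl] by blast
  show ?thesis
  proof (intro conjI allI impI)
    fix a :: "'a \<Rightarrow> 'k"
    assume "gr_elem G a \<and> gr_rank a = 2 \<and> gr_one_sided_invertible G a"
    then obtain s r g h where "s \<noteq> 0" "g \<in> carrier G" "h \<in> carrier G" "ord g > 1" "r ^ ord g \<noteq> 1"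
      "a = gr_mult G (gr_of s h) (gr_minus (gr_one G) (gr_of r g))"
      using core by blast
    thus "gr_invertible G a" using inv3 by blast
  next
    fix a :: "'a \<Rightarrow> 'k"
    assume a: "gr_elem G a \<and> gr_rank a = 2"
    show "gr_invertible G a \<longleftrightarrow>
           (\<exists>s r g h. s \<noteq> 0 \<and> r \<noteq> 0 \<and> g \<in> carrier G \<and> h \<in> carrier G \<and>
              ord g > 1 \<and> r ^ ord g \<noteq> 1 \<and>
              a = gr_mult G (gr_of s h) (gr_minus (gr_one G) (gr_of r g)))"
    proof
      assume "gr_invertible G a"
      hence "gr_one_sided_invertible G a"
        unfolding gr_invertible_def gr_one_sided_invertible_def by blast
      thus "\<exists>s r g h. s \<noteq> 0 \<and> r \<noteq> 0 \<and> g \<in> carrier G \<and> h \<in> carrier G \<and>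
              ord g > 1 \<and> r ^ ord g \<noteq> 1 \<and>
              a = gr_mult G (gr_of s h) (gr_minus (gr_one G) (gr_of r g))"
        using core a by blast
    next
      assume "\<exists>s r g h. s \<noteq> 0 \<and> r \<noteq> 0 \<and> g \<in> carrier G \<and> h \<in> carrier G \<and>
              ord g > 1 \<and> r ^ ord g \<noteq> 1 \<and>
              a = gr_mult G (gr_of s h) (gr_minus (gr_one G) (gr_of r g))"
      thus "gr_invertible G a" using inv3 by blast
    qed
  next
    fix a :: "'a \<Rightarrow> 'k" and s r g h
    assume H: "gr_elem G a \<and> gr_rank a = 2 \<and>
         s \<noteq> 0 \<and> r \<noteq> 0 \<and> g \<in> carrier G \<and> h \<in> carrier G \<and>
         ord g > 1 \<and> r ^ ord g \<noteq> 1 \<and>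
         a = gr_mult G (gr_of s h) (gr_minus (gr_one G) (gr_of r g))"
    show "let n = ord g;
              b = gr_mult G
                    (gr_mult G (gr_of (inverse (1 - r ^ n)) \<one>)
                       (\<lambda>z. \<Sum>i<n. gr_of (r ^ i) (g [^] i) z))
                    (gr_of (inverse s) (inv h))
          in gr_elem G b \<and> gr_mult G a b = gr_one G \<and> gr_mult G b a = gr_one G"
      unfolding Let_def using H P3[OF _ _ _ _ _ refl] by blast
  qed
qed


end

theorem proposition2p2:
  fixes G :: "('g, 'm) monoid_scheme" and dummy :: "'k::division_ring"
  assumes "group G"
  shows
    "(\<forall>a :: 'g \<Rightarrow> 'k. gr_elem G a \<and> gr_rank a = 2 \<and> gr_one_sided_invertible G a
         \<longrightarrow> gr_invertible G a)
   \<and> (\<forall>a :: 'g \<Rightarrow> 'k. gr_elem G a \<and> gr_rank a = 2 \<longrightarrow>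
         (gr_invertible G a \<longleftrightarrow>
           (\<exists>s r g h. s \<noteq> 0 \<and> r \<noteq> 0 \<and> g \<in> carrier G \<and> h \<in> carrier G \<and>
              group.ord G g > 1 \<and> r ^ group.ord G g \<noteq> 1 \<and>
              a = gr_mult G (gr_of s h) (gr_minus (gr_one G) (gr_of r g)))))
   \<and> (\<forall>(a :: 'g \<Rightarrow> 'k) s r g h. gr_elem G a \<and> gr_rank a = 2 \<and>
         s \<noteq> 0 \<and> r \<noteq> 0 \<and> g \<in> carrier G \<and> h \<in> carrier G \<and>
         group.ord G g > 1 \<and> r ^ group.ord G g \<noteq> 1 \<and>
         a = gr_mult G (gr_of s h) (gr_minus (gr_one G) (gr_of r g)) \<longrightarrow>
         (let n = group.ord G g;
              b = gr_mult G
                    (gr_mult G (gr_of (inverse (1 - r ^ n)) \<one>\<^bsub>G\<^esub>)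
                       (\<lambda>z. \<Sum>i<n. gr_of (r ^ i) (g [^]\<^bsub>G\<^esub> i) z))
                    (gr_of (inverse s) (inv\<^bsub>G\<^esub> h))
          in gr_elem G b \<and> gr_mult G a b = gr_one G \<and> gr_mult G b a = gr_one G))"
  using group.main[OF assms] by blast

end
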